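(* Let $S$ be an idempotent semiring. The following are equivalent: (1) $\mathcal{R}^{\bullet}$ is the least distributive lattice congruence on $S$; (2) $\mathcal{D}^{+}\subseteq\mathcal{R}^{\bullet}$ and $S$ satisfies $x+yx+x\approx x$; (3) $S$ satisfies $x+xyx+x\approx x$ and $\mathcal{L}^{\bullet}\subseteq\mathcal{D}^{+}\subseteq\mathcal{R}^{\bullet}$; (4) $\leq^{r}_{\cdot}\ \subseteq\ \leq_{+}$ on $S$; (5) $S$ satisfies the identity $x\approx yx+x+yx$; (6) $S$ satisfies the identity $x\approx (y+x+y)x$.
   Context: An idempotent semiring is an algebra $(S,+,\cdot)$ with two binary operations such that $(S,+)$ and $(S,\cdot)$ are bands (associative, with $x+x=x$ and $xx=x$), and both distributive laws $x(y+z)=xy+xz$ and $(x+y)z=xz+yz$ hold; addition is not assumed commutative. A distributive lattice congruence on $S$ is a congruence $\rho$ such that $S/\rho$ satisfies $x+y\approx y+x$, $xy\approx yx$ and $x+xy\approx x$. Green's relations: $a\,\mathcal{L}^{\bullet}\,b$ iff $ab=a$ and $ba=b$; $a\,\mathcal{R}^{\bullet}\,b$ iff $ab=b$ and $ba=a$; $a\,\mathcal{D}^{+}\,b$ iff $a+b+a=a$ and $b+a+b=b$. Orders: $a\leq^{r}_{\cdot} b$ iff $a=ab$; $a\leq_{+} b$ iff $b=a+b$ and $b=b+a$. *)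

theory Defs
  imports Main
begin

text \<open>An idempotent semiring on the carrier type 'a, with addition pl and
multiplication mu (addition not assumed commutative).\<close>
definition idem_semiring :: "('a \<Rightarrow> 'a \<Rightarrow> 'a) \<Rightarrow> ('a \<Rightarrow> 'a \<Rightarrow> 'a) \<Rightarrow> bool" where
  "idem_semiring pl mu \<longleftrightarrow>
     (\<forall>x y z. pl (pl x y) z = pl x (pl y z)) \<and> (\<forall>x. pl x x = x) \<and>
     (\<forall>x y z. mu (mu x y) z = mu x (mu y z)) \<and> (\<forall>x. mu x x = x) \<and>
     (\<forall>x y z. mu x (pl y z) = pl (mu x y) (mu x z)) \<and>
     (\<forall>x y z. mu (pl x y) z = pl (mu x z) (mu y z))"

definition congruence :: "('a \<Rightarrow> 'a \<Rightarrow> 'a) \<Rightarrow> ('a \<Rightarrow> 'a \<Rightarrow> 'a) \<Rightarrow> ('a \<Rightarrow> 'a \<Rightarrow> bool) \<Rightarrow> bool" where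
  "congruence pl mu \<rho> \<longleftrightarrow> equivp \<rho> \<and>
     (\<forall>a b c d. \<rho> a b \<and> \<rho> c d \<longrightarrow> \<rho> (pl a c) (pl b d) \<and> \<rho> (mu a c) (mu b d))"

text \<open>S/rho satisfies x+y = y+x, xy = yx, x+xy = x (unfolded on representatives).\<close>
definition dl_congruence :: "('a \<Rightarrow> 'a \<Rightarrow> 'a) \<Rightarrow> ('a \<Rightarrow> 'a \<Rightarrow> 'a) \<Rightarrow> ('a \<Rightarrow> 'a \<Rightarrow> bool) \<Rightarrow> bool" where
  "dl_congruence pl mu \<rho> \<longleftrightarrow> congruence pl mu \<rho> \<and>
     (\<forall>x y. \<rho> (pl x y) (pl y x) \<and> \<rho> (mu x y) (mu y x) \<and> \<rho> (pl x (mu x y)) x)"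

definition least_dl_congruence :: "('a \<Rightarrow> 'a \<Rightarrow> 'a) \<Rightarrow> ('a \<Rightarrow> 'a \<Rightarrow> 'a) \<Rightarrow> ('a \<Rightarrow> 'a \<Rightarrow> bool) \<Rightarrow> bool" where
  "least_dl_congruence pl mu \<rho> \<longleftrightarrow> dl_congruence pl mu \<rho> \<and>
     (\<forall>\<sigma>. dl_congruence pl mu \<sigma> \<longrightarrow> (\<forall>a b. \<rho> a b \<longrightarrow> \<sigma> a b))"

definition Lmul :: "('a \<Rightarrow> 'a \<Rightarrow> 'a) \<Rightarrow> 'a \<Rightarrow> 'a \<Rightarrow> bool" where
  "Lmul mu a b \<longleftrightarrow> mu a b = a \<and> mu b a = b"

definition Rmul :: "('a \<Rightarrow> 'a \<Rightarrow> 'a) \<Rightarrow> 'a \<Rightarrow> 'a \<Rightarrow> bool" where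
  "Rmul mu a b \<longleftrightarrow> mu a b = b \<and> mu b a = a"

definition Dadd :: "('a \<Rightarrow> 'a \<Rightarrow> 'a) \<Rightarrow> 'a \<Rightarrow> 'a \<Rightarrow> bool" where
  "Dadd pl a b \<longleftrightarrow> pl (pl a b) a = a \<and> pl (pl b a) b = b"

definition le_mul_r :: "('a \<Rightarrow> 'a \<Rightarrow> 'a) \<Rightarrow> 'a \<Rightarrow> 'a \<Rightarrow> bool" where
  "le_mul_r mu a b \<longleftrightarrow> a = mu a b"

definition le_add :: "('a \<Rightarrow> 'a \<Rightarrow> 'a) \<Rightarrow> 'a \<Rightarrow> 'a \<Rightarrow> bool" where
  "le_add pl a b \<longleftrightarrow> b = pl a b \<and> b = pl b a"

end

theory Submission
  imports Defs
begin

locale isr =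
  fixes pl mu :: "'a \<Rightarrow> 'a \<Rightarrow> 'a"
  assumes a1: "pl (pl x y) z = pl x (pl y z)"
    and a2: "pl x x = x"
    and m1: "mu (mu x y) z = mu x (mu y z)"
    and m2: "mu x x = x"
    and dl: "mu x (pl y z) = pl (mu x y) (mu x z)"
    and dr: "mu (pl x y) z = pl (mu x z) (mu y z)"
begin

lemma a3: "pl x (pl x y) = pl x y" by (metis a1 a2)
lemma m3: "mu x (mu x y) = mu x y" by (metis m1 m2)
lemma m4: "mu x (mu y (mu x y)) = mu x y" by (metis m1 m2)

lemma P5_A:
  assumes P5: "\<forall>x y. x = pl (pl (mu y x) x) (mu y x)"
  shows "pl x (mu y x) = x \<and> pl (mu y x) x = x"
proof -
  have e: "x = pl (pl (mu y x) x) (mu y x)" using P5 by blast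
  have "pl x (mu y x) = pl (pl (pl (mu y x) x) (mu y x)) (mu y x)" using e by metis
  also have "\<dots> = pl (pl (mu y x) x) (mu y x)" by (simp add: a1 a2)
  finally have 1: "pl x (mu y x) = x" using e by simp
  have "pl (mu y x) x = pl (mu y x) (pl (pl (mu y x) x) (mu y x))" using e by metis
  also have "\<dots> = pl (pl (mu y x) x) (mu y x)" by (simp add: a1 a3)
  finally have 2: "pl (mu y x) x = x" using e by simp
  show ?thesis using 1 2 by simp
qed

lemma A_P5:
  assumes "\<And>x y. pl x (mu y x) = x" "\<And>x y. pl (mu y x) x = x"
  shows "\<forall>x y. x = pl (pl (mu y x) x) (mu y x)"
  using assms by simp

lemma P56: "(\<forall>x y. x = pl (pl (mu y x) x) (mu y x)) \<longleftrightarrow> (\<forall>x y. x = mu (pl (pl y x) y) x)"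
  by (simp add: dr m2)

lemma P4_P5:
  assumes "\<forall>a b. le_mul_r mu a b \<longrightarrow> le_add pl a b"
  shows "\<forall>x y. x = pl (pl (mu y x) x) (mu y x)"
proof (intro allI)
  fix x y
  have "le_mul_r mu (mu y x) x" unfolding le_mul_r_def by (simp add: m1 m2)
  then have "x = pl (mu y x) x \<and> x = pl x (mu y x)" using assms unfolding le_add_def by blast
  then show "x = pl (pl (mu y x) x) (mu y x)" by metis
qed

lemma P5_P4:
  assumes P5: "\<forall>x y. x = pl (pl (mu y x) x) (mu y x)"
  shows "\<forall>a b. le_mul_r mu a b \<longrightarrow> le_add pl a b"
proof (intro allI impI)
  fix a b assume "le_mul_r mu a b"
  then have ab: "mu a b = a" unfolding le_mul_r_def by simp
  have "pl b (mu a b) = b \<and> pl (mu a b) b = b" using P5_A[OF P5] by blast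
  then show "le_add pl a b" unfolding le_add_def using ab by simp
qed

lemma P5_Dadd:
  assumes P5: "\<forall>x y. x = pl (pl (mu y x) x) (mu y x)" and d: "Dadd pl a b"
  shows "Rmul mu a b"
proof -
  have d1: "pl (pl a b) a = a" and d2: "pl (pl b a) b = b" using d unfolding Dadd_def by auto
  have "mu a b = mu (pl (pl a b) a) b" using d1 by simp
  also have "\<dots> = pl (pl (mu a b) b) (mu a b)" by (simp add: dr m2)
  also have "\<dots> = b" using P5 by metis
  finally have 1: "mu a b = b" .
  have "mu b a = mu (pl (pl b a) b) a" using d2 by simp
  also have "\<dots> = pl (pl (mu b a) a) (mu b a)" by (simp add: dr m2)
  also have "\<dots> = a" using P5 by metis
  finally have 2: "mu b a = a" .
  show ?thesis unfolding Rmul_def using 1 2 by simp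
qed

lemma P5_P2:
  assumes P5: "\<forall>x y. x = pl (pl (mu y x) x) (mu y x)"
  shows "(\<forall>a b. Dadd pl a b \<longrightarrow> Rmul mu a b) \<and> (\<forall>x y. pl (pl x (mu y x)) x = x)"
  using P5_Dadd[OF P5] P5_A[OF P5] by (simp add: a2)

lemma P2_P5:
  assumes D: "\<forall>a b. Dadd pl a b \<longrightarrow> Rmul mu a b" and T: "\<forall>x y. pl (pl x (mu y x)) x = x"
  shows "\<forall>x y. x = pl (pl (mu y x) x) (mu y x)"
proof (intro allI)
  fix x y
  have t: "pl x (pl (mu y x) x) = x" using T by (simp add: a1)
  have "Dadd pl x (pl x (mu y x))" unfolding Dadd_def
    using t by (simp add: a1 a2 a3)
  then have "Rmul mu x (pl x (mu y x))" using D by blast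
  then have 1: "pl x (mu y x) = x" unfolding Rmul_def by (simp add: dr m1 m2)
  have "Dadd pl x (pl (mu y x) x)" unfolding Dadd_def
    using t by (simp add: a1 a2 a3)
  then have "Rmul mu x (pl (mu y x) x)" using D by blast
  then have 2: "pl (mu y x) x = x" unfolding Rmul_def by (simp add: dr m1 m2)
  show "x = pl (pl (mu y x) x) (mu y x)" using 1 2 by simp
qed


lemma P3_P4:
  assumes T: "\<forall>x y. pl (pl x (mu (mu x y) x)) x = x"
    and LD: "\<forall>a b. Lmul mu a b \<longrightarrow> Dadd pl a b"
    and DR: "\<forall>a b. Dadd pl a b \<longrightarrow> Rmul mu a b"
  shows "\<forall>a b. le_mul_r mu a b \<longrightarrow> le_add pl a b"
proof (intro allI impI)
  fix a b assume "le_mul_r mu a b"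
  then have ab: "mu a b = a" unfolding le_mul_r_def by simp
  have "Lmul mu a (mu b a)" unfolding Lmul_def using ab by (metis m1 m2)
  then have "Rmul mu a (mu b a)" using LD DR by blast
  then have ba: "mu b a = a" unfolding Rmul_def using ab by (metis m1)
  have "pl (pl b (mu (mu b a) b)) b = b" using T by blast
  then have bab: "pl (pl b a) b = b" using ab ba by simp
  have "Dadd pl b (pl b a)" unfolding Dadd_def using bab by (metis a1 a2)
  then have "Rmul mu b (pl b a)" using DR by blast
  then have 1: "pl b a = b" unfolding Rmul_def using ab by (simp add: dr m2)
  have "Dadd pl b (pl a b)" unfolding Dadd_def using bab by (metis a1 a2)
  then have "Rmul mu b (pl a b)" using DR by blast
  then have 2: "pl a b = b" unfolding Rmul_def using ab by (simp add: dr m2)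
  show "le_add pl a b" unfolding le_add_def using 1 2 by simp
qed

lemma P4_P3:
  assumes P4: "\<forall>a b. le_mul_r mu a b \<longrightarrow> le_add pl a b"
  shows "(\<forall>x y. pl (pl x (mu (mu x y) x)) x = x) \<and>
         (\<forall>a b. Lmul mu a b \<longrightarrow> Dadd pl a b) \<and>
         (\<forall>a b. Dadd pl a b \<longrightarrow> Rmul mu a b)"
proof -
  have P5: "\<forall>x y. x = pl (pl (mu y x) x) (mu y x)" using P4_P5[OF P4] .
  have 1: "\<forall>x y. pl (pl x (mu (mu x y) x)) x = x"
    using P5_A[OF P5] by (simp add: a2)
  have 2: "\<forall>a b. Lmul mu a b \<longrightarrow> Dadd pl a b"
  proof (intro allI impI)
    fix a b assume "Lmul mu a b"
    then have "le_mul_r mu a b" "le_mul_r mu b a" unfolding Lmul_def le_mul_r_def by auto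
    then have "le_add pl a b" "le_add pl b a" using P4 by blast+
    then have "a = b" unfolding le_add_def by metis
    then show "Dadd pl a b" unfolding Dadd_def by (simp add: a2)
  qed
  show ?thesis using 1 2 P5_Dadd[OF P5] by blast
qed

lemma P5_rr:
  assumes P5: "\<forall>x y. x = pl (pl (mu y x) x) (mu y x)"
  shows "mu x (mu y x) = mu y x"
proof -
  have "pl (mu x (mu y x)) (mu y x) = mu y x" using P5_A[OF P5] by blast
  moreover have "pl (mu x (mu y x)) (mu y (mu x (mu y x))) = mu x (mu y x)" using P5_A[OF P5] by blast
  ultimately show ?thesis by (simp add: m4)
qed

lemma P5_P1:
  assumes P5: "\<forall>x y. x = pl (pl (mu y x) x) (mu y x)"
  shows "least_dl_congruence pl mu (Rmul mu)"
proof -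
  have A1: "\<And>x y. pl x (mu y x) = x" and A2: "\<And>x y. pl (mu y x) x = x"
    using P5_A[OF P5] by blast+
  have rr: "\<And>x y. mu x (mu y x) = mu y x" using P5_rr[OF P5] .
  have eq: "equivp (Rmul mu)"
    by (rule equivpI) (auto simp: reflp_def symp_def transp_def Rmul_def m2, metis m1, metis m1)
  have cm: "Rmul mu (mu a c) (mu b d)" if "Rmul mu a b" "Rmul mu c d" for a b c d
  proof -
    have ab: "mu a b = b" "mu b a = a" and cd: "mu c d = d" "mu d c = c" using that unfolding Rmul_def by auto
    have "mu (mu a c) (mu b d) = mu a (mu c (mu b (mu c d)))" using cd by (simp add: m1)
    also have "\<dots> = mu a (mu b (mu c d))" using rr by (metis m1)
    also have "\<dots> = mu b d" using ab cd by (metis m1)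
    finally have 1: "mu (mu a c) (mu b d) = mu b d" .
    have "mu (mu b d) (mu a c) = mu b (mu d (mu a (mu d c)))" using cd by (simp add: m1)
    also have "\<dots> = mu b (mu a (mu d c))" using rr by (metis m1)
    also have "\<dots> = mu a c" using ab cd by (metis m1)
    finally have 2: "mu (mu b d) (mu a c) = mu a c" .
    show ?thesis unfolding Rmul_def using 1 2 by simp
  qed
  have pr: "Rmul mu (pl a c) (pl b c)" if "Rmul mu a b" for a b c
  proof -
    have ab: "mu a b = b" "mu b a = a" using that unfolding Rmul_def by auto
    have "mu (pl a c) (pl b c) = pl (pl (mu a b) (mu c b)) (pl (mu a c) (mu c c))" by (simp add: dl dr a1)
    also have "\<dots> = pl b c" using ab A1 A2 by (simp add: m2 a1)
    finally have 1: "mu (pl a c) (pl b c) = pl b c" .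
    have "mu (pl b c) (pl a c) = pl (pl (mu b a) (mu c a)) (pl (mu b c) (mu c c))" by (simp add: dl dr a1)
    also have "\<dots> = pl a c" using ab A1 A2 by (simp add: m2 a1)
    finally have 2: "mu (pl b c) (pl a c) = pl a c" .
    show ?thesis unfolding Rmul_def using 1 2 by simp
  qed
  have pl': "Rmul mu (pl c a) (pl c b)" if "Rmul mu a b" for a b c
  proof -
    have ab: "mu a b = b" "mu b a = a" using that unfolding Rmul_def by auto
    have "mu (pl c a) (pl c b) = pl (pl (mu c c) (mu a c)) (pl (mu c b) (mu a b))" by (simp add: dl dr a1)
    also have "\<dots> = pl c b" using ab A1 A2 by (simp add: m2 a1 flip: a1)
    finally have 1: "mu (pl c a) (pl c b) = pl c b" .
    have "mu (pl c b) (pl c a) = pl (pl (mu c c) (mu b c)) (pl (mu c a) (mu b a))" by (simp add: dl dr a1)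
    also have "\<dots> = pl c a" using ab A1 A2 by (simp add: m2 a1 flip: a1)
    finally have 2: "mu (pl c b) (pl c a) = pl c a" .
    show ?thesis unfolding Rmul_def using 1 2 by simp
  qed
  have cong: "congruence pl mu (Rmul mu)"
    unfolding congruence_def
  proof (intro conjI allI impI eq)
    fix a b c d assume h: "Rmul mu a b \<and> Rmul mu c d"
    show "Rmul mu (mu a c) (mu b d)" using cm h by blast
    have "Rmul mu (pl a c) (pl b c)" using pr h by blast
    moreover have "Rmul mu (pl b c) (pl b d)" using pl' h by blast
    ultimately show "Rmul mu (pl a c) (pl b d)" using eq by (meson equivp_transp)
  qed
  have dlc: "dl_congruence pl mu (Rmul mu)"
    unfolding dl_congruence_def
  proof (intro conjI allI cong)
    fix x y
    show "Rmul mu (pl x y) (pl y x)" unfolding Rmul_def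
      using A1 A2 by (simp add: dl dr m2)
    show "Rmul mu (mu x y) (mu y x)" unfolding Rmul_def
      using rr by (simp add: m1 m2) (metis m1)
    show "Rmul mu (pl x (mu x y)) x" unfolding Rmul_def
      using A1 rr by (simp add: dl dr m2 m3 m1)
  qed
  show ?thesis unfolding least_dl_congruence_def
  proof (intro conjI allI impI dlc)
    fix \<sigma> a b assume s: "dl_congruence pl mu \<sigma>" and r: "Rmul mu a b"
    have "\<sigma> (mu a b) (mu b a)" using s unfolding dl_congruence_def by blast
    then have "\<sigma> b a" using r unfolding Rmul_def by simp
    moreover have "equivp \<sigma>" using s unfolding dl_congruence_def congruence_def by blast
    ultimately show "\<sigma> a b" by (meson equivp_symp)
  qed
qed

lemma P1_P5:
  assumes P1: "least_dl_congruence pl mu (Rmul mu)"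
  shows "\<forall>x y. x = pl (pl (mu y x) x) (mu y x)"
proof (intro allI)
  fix x y
  have D: "\<And>x y. Rmul mu (pl x y) (pl y x) \<and> Rmul mu (mu x y) (mu y x) \<and> Rmul mu (pl x (mu x y)) x"
    using P1 unfolding least_dl_congruence_def dl_congruence_def by blast
  have rr: "mu x (mu y x) = mu y x" using D[of x y] unfolding Rmul_def by (simp add: m1 m3)
  have t: "pl x (mu y x) = x" using D[of x y] rr unfolding Rmul_def by (simp add: dr m1 m2)
  have "mu (pl (mu y x) x) (pl x (mu y x)) = pl x (mu y x)" using D[of x "mu y x"] unfolding Rmul_def by simp
  then have "pl (pl (mu y x) x) (mu y x) = pl x (mu y x)" using rr by (simp add: dl dr m1 m2 a1 a2)
  then show "x = pl (pl (mu y x) x) (mu y x)" using t by simp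
qed

end

theorem theorem3p4:
  fixes pl mu :: "'a \<Rightarrow> 'a \<Rightarrow> 'a"
  assumes "idem_semiring pl mu"
  defines "P1 \<equiv> least_dl_congruence pl mu (Rmul mu)"
      and "P2 \<equiv> (\<forall>a b. Dadd pl a b \<longrightarrow> Rmul mu a b) \<and>
                 (\<forall>x y. pl (pl x (mu y x)) x = x)"
      and "P3 \<equiv> (\<forall>x y. pl (pl x (mu (mu x y) x)) x = x) \<and>
                 (\<forall>a b. Lmul mu a b \<longrightarrow> Dadd pl a b) \<and>
                 (\<forall>a b. Dadd pl a b \<longrightarrow> Rmul mu a b)"
      and "P4 \<equiv> (\<forall>a b. le_mul_r mu a b \<longrightarrow> le_add pl a b)"
      and "P5 \<equiv> (\<forall>x y. x = pl (pl (mu y x) x) (mu y x))"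
      and "P6 \<equiv> (\<forall>x y. x = mu (pl (pl y x) y) x)"
  shows "(P1 \<longleftrightarrow> P2) \<and> (P2 \<longleftrightarrow> P3) \<and> (P3 \<longleftrightarrow> P4) \<and> (P4 \<longleftrightarrow> P5) \<and> (P5 \<longleftrightarrow> P6)"
proof -
  interpret isr pl mu
    using assms(1) unfolding idem_semiring_def by unfold_locales blast+
  have 15: "P1 \<longleftrightarrow> P5" unfolding P1_def P5_def using P1_P5 P5_P1 by blast
  have 25: "P2 \<longleftrightarrow> P5" unfolding P2_def P5_def using P2_P5 P5_P2 by blast
  have 34: "P3 \<longleftrightarrow> P4" unfolding P3_def P4_def using P3_P4 P4_P3 by blast
  have 45: "P4 \<longleftrightarrow> P5" unfolding P4_def P5_def using P4_P5 P5_P4 by blast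
  have 56: "P5 \<longleftrightarrow> P6" unfolding P5_def P6_def using P56 .
  show ?thesis using 15 25 34 45 56 by blast
qed

end
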